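(* Let $\mathbb{F}$ be an arbitrary field. Let $P(t,y)\in\mathbb{F}[[t,y]]$ and $\varphi(t)\in\mathbb{F}[[t]]$ satisfy $\varphi(0)=0$, $P(t,\varphi(t))=0$ and $\partial_y P(0,0)=\alpha\neq 0$. Then $$\varphi(t) = \sum_{m\ge 1}\frac{1}{\alpha^{m+1}}\,[y^{m-1}]\Big(\partial_yP(t,y)\cdot(\alpha y - P(t,y))^m\Big).$$ If moreover $\mathbb{F}$ has characteristic zero, then also $$\varphi(t) = \sum_{m\ge 1}\frac{1}{m\,\alpha^{m}}\,[y^{m-1}]\Big((\alpha y - P(t,y))^m\Big).$$ (Both sums converge in the $t$-adic topology of $\mathbb{F}[[t]]$.)
   Context: For a power series $G(t,y)\in\mathbb{F}[[t,y]]$, $[y^a](G)\in\mathbb{F}[[t]]$ denotes the coefficient of $y^a$ when $G$ is viewed as a power series in $y$ with coefficients in $\mathbb{F}[[t]]$. *)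

theory Defs
  imports "HOL-Computational_Algebra.Formal_Power_Series"
begin

text \<open>A bivariate series in F[[t,y]] is represented as an element of (F[[t]])[[y]],
  i.e. of type 'a fps fps: the outer variable is y, coefficients are series in t.
  F[[t]] carries the t-adic metric from the library.\<close>

definition subst_y :: "'a::comm_ring_1 fps fps \<Rightarrow> 'a fps \<Rightarrow> 'a fps" where
  "subst_y P \<phi> = (\<Sum>n. fps_nth P n * \<phi> ^ n)"

end

theory Submission imports Defs "HOL-Library.Multiset" begin
unbundle fps_syntax

definition swp :: "nat \<Rightarrow> nat list \<Rightarrow> nat list" where
  "swp j v = v[0 := v!j, j := v!0]"

lemma swp_length[simp]: "length (swp j v) = length v"
  by (simp add: swp_def)

lemma ne_of_less: "j < length v \<Longrightarrow> v \<noteq> []" by (cases v) auto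

lemma swp_mset: assumes "j < length v" shows "mset (swp j v) = mset v"
proof -
  have "0 < length v" using ne_of_less[OF assms] by simp
  then show ?thesis unfolding swp_def using mset_swap[of j v 0] assms by blast
qed

lemma swp_nth0: assumes "j < length v" shows "swp j v ! 0 = v ! j"
proof -
  have l: "0 < length v" using ne_of_less[OF assms] by simp
  show ?thesis
  proof (cases "j = 0")
    case True then show ?thesis using l by (simp add: swp_def)
  next
    case False then show ?thesis using l assms by (simp add: swp_def nth_list_update)
  qed
qed

lemma swp_nthj: assumes "j < length v" shows "swp j v ! j = v ! 0"
  using assms by (simp add: swp_def nth_list_update)

lemma swp_swp: assumes "j < length v" shows "swp j (swp j v) = v"
proof -
  have l: "0 < length v" using ne_of_less[OF assms] by simp
  show ?thesis using l assms
    by (intro nth_equalityI) (auto simp: swp_def nth_list_update)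
qed

lemma fiber_sum:
  fixes M :: "nat multiset"
  assumes n: "n > 0"
  defines "F \<equiv> {v \<in> natpermute n n. mset v = M}"
  shows "(\<Sum>v\<in>F. v!0) = card F"
proof -
  have fin: "finite F" unfolding F_def using natpermute_finite by auto
  have sym: "(\<Sum>v\<in>F. v!j) = (\<Sum>v\<in>F. v!0)" if j: "j < n" for j
  proof -
    have mem: "swp j v \<in> F \<and> swp j (swp j v) = v \<and> swp j v ! 0 = v ! j" if "v \<in> F" for v
    proof -
    from that have l: "length v = n" and s: "sum_list v = n" and m: "mset v = M"
      by (auto simp: F_def natpermute_def)
    have "sum_list (swp j v) = sum_list v"
      using swp_mset[of j v] l j by (metis sum_mset_sum_list)
    then show ?thesis using l s m j swp_mset[of j v] swp_swp[of j v] swp_nth0[of j v]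
      by (auto simp: F_def natpermute_def)
    qed
    show ?thesis by (rule sum.reindex_bij_witness[of _ "swp j" "swp j"]) (use mem in simp_all)
  qed
  have "(\<Sum>j<n. \<Sum>v\<in>F. v!j) = (\<Sum>j<n. \<Sum>v\<in>F. v!0)"
    by (rule sum.cong[OF refl]) (rule sym, simp)
  then have "n * (\<Sum>v\<in>F. v!0) = (\<Sum>j<n. \<Sum>v\<in>F. v!j)"
    by simp
  also have "\<dots> = (\<Sum>v\<in>F. \<Sum>j<n. v!j)" by (rule sum.swap)
  also have "\<dots> = (\<Sum>v\<in>F. n)"
  proof (rule sum.cong[OF refl])
    fix v assume "v \<in> F"
    then have l: "length v = n" and s: "sum_list v = n"
      by (auto simp: F_def natpermute_def)
    show "(\<Sum>j<n. v!j) = n" using sum_list_sum_nth[of v] l s by (simp add: atLeast0LessThan)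
  qed
  also have "\<dots> = n * card F" by simp
  finally show ?thesis using n by simp
qed

lemma cyc_sum:
  fixes w :: "nat list \<Rightarrow> 'b::comm_semiring_1"
  assumes w: "\<And>u v. mset u = mset v \<Longrightarrow> w u = w v" and n: "n > 0"
  shows "(\<Sum>v\<in>natpermute n n. of_nat (v!0) * w v) = (\<Sum>v\<in>natpermute n n. w v)"
proof -
  let ?A = "natpermute n n"
  have fin: "finite ?A" by (rule natpermute_finite)
  have "(\<Sum>v\<in>?A. of_nat (v!0) * w v) = (\<Sum>M\<in>mset ` ?A. \<Sum>v\<in>{v\<in>?A. mset v = M}. of_nat (v!0) * w v)"
    by (rule sum.image_gen[OF fin])
  also have "\<dots> = (\<Sum>M\<in>mset ` ?A. \<Sum>v\<in>{v\<in>?A. mset v = M}. w v)"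
  proof (rule sum.cong[OF refl])
    fix M assume "M \<in> mset ` ?A"
    then obtain u where u: "u \<in> ?A" "mset u = M" by auto
    let ?F = "{v\<in>?A. mset v = M}"
    have wc: "v \<in> ?F \<Longrightarrow> w v = w u" for v using w u by auto
    have "(\<Sum>v\<in>?F. of_nat (v!0) * w v) = (\<Sum>v\<in>?F. of_nat (v!0) * w u)"
      using wc by (intro sum.cong) auto
    also have "\<dots> = of_nat (\<Sum>v\<in>?F. v!0) * w u" by (simp add: sum_distrib_right)
    also have "\<dots> = of_nat (card ?F) * w u" using fiber_sum[OF n, of M] by simp
    also have "\<dots> = (\<Sum>v\<in>?F. w v)" using wc by simp
    finally show "(\<Sum>v\<in>?F. of_nat (v!0) * w v) = (\<Sum>v\<in>?F. w v)" .
  qed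
  also have "\<dots> = (\<Sum>v\<in>?A. w v)" by (rule sum.image_gen[OF fin, symmetric])
  finally show ?thesis .
qed


lemma prod_list_nth: "prod_list (map g v) = (\<Prod>j<length v. g (v!j))"
proof (induction v)
  case Nil then show ?case by simp
next
  case (Cons a v) then show ?case unfolding length_Cons prod.lessThan_Suc_shift by simp
qed

lemma J_lemma:
  fixes G :: "'b::comm_ring_1 fps"
  shows "(fps_deriv G * G^m) $ m = (G^(Suc m)) $ (Suc m)"
proof -
  define a where "a = (\<lambda>j::nat. if j = 0 then fps_X * fps_deriv G else G)"
  define w where "w = (\<lambda>v. prod_list (map (\<lambda>i. G $ i) v))"
  have w_mset: "w u = w v" if "mset u = mset v" for u v
  proof -
    have "w u = prod_mset (image_mset (\<lambda>i. G $ i) (mset u))"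
      unfolding w_def by (metis prod_mset_prod_list mset_map)
    also have "\<dots> = w v" using that unfolding w_def by (metis prod_mset_prod_list mset_map)
    finally show ?thesis .
  qed
  have pa: "prod a {0..m} = (fps_X * fps_deriv G) * G^m"
  proof -
    have "prod a {0..m} = a 0 * prod a {Suc 0..m}" by (rule prod.atLeast_Suc_atMost) simp
    also have "prod a {Suc 0..m} = prod (\<lambda>_. G) {Suc 0..m}"
      by (rule prod.cong) (auto simp: a_def)
    also have "\<dots> = G^m" by simp
    finally show ?thesis by (simp add: a_def)
  qed
  have xd: "(fps_X * fps_deriv G) $ k = of_nat k * G $ k" for k
    by (cases k) (simp_all add: algebra_simps)
  have trm: "(\<Prod>j\<in>{0..m}. a j $ (v!j)) = of_nat (v!0) * w v" if "v \<in> natpermute (Suc m) (Suc m)" for v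
  proof -
    from that have l: "length v = Suc m" by (simp add: natpermute_def)
    have "(\<Prod>j\<in>{0..m}. a j $ (v!j)) = a 0 $ (v!0) * (\<Prod>j\<in>{Suc 0..m}. a j $ (v!j))"
      by (rule prod.atLeast_Suc_atMost) simp
    also have "(\<Prod>j\<in>{Suc 0..m}. a j $ (v!j)) = (\<Prod>j\<in>{Suc 0..m}. G $ (v!j))"
      by (rule prod.cong) (auto simp: a_def)
    also have "a 0 $ (v!0) = of_nat (v!0) * G $ (v!0)" by (simp add: a_def xd)
    also have "of_nat (v!0) * G $ (v!0) * (\<Prod>j\<in>{Suc 0..m}. G $ (v!j)) = of_nat (v!0) * (\<Prod>j\<in>{0..m}. G $ (v!j))"
      by (simp add: prod.atLeast_Suc_atMost[of 0 m] mult.assoc)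
    also have "(\<Prod>j\<in>{0..m}. G $ (v!j)) = w v"
      unfolding w_def prod_list_nth l by (simp add: atLeast0AtMost lessThan_Suc_atMost)
    finally show ?thesis .
  qed
  have trm2: "(\<Prod>j\<in>{0..m}. G $ (v!j)) = w v" if "v \<in> natpermute (Suc m) (Suc m)" for v
  proof -
    from that have l: "length v = Suc m" by (simp add: natpermute_def)
    show ?thesis unfolding w_def prod_list_nth l by (simp add: atLeast0AtMost lessThan_Suc_atMost)
  qed
  have "(fps_deriv G * G^m) $ m = (fps_X * (fps_deriv G * G^m)) $ Suc m" by simp
  also have "\<dots> = (prod a {0..m}) $ Suc m" by (simp add: pa mult.assoc)
  also have "\<dots> = (\<Sum>v\<in>natpermute (Suc m) (Suc m). \<Prod>j\<in>{0..m}. a j $ (v!j))"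
    using fps_prod_nth[of a m "Suc m"] by simp
  also have "\<dots> = (\<Sum>v\<in>natpermute (Suc m) (Suc m). of_nat (v!0) * w v)"
    by (rule sum.cong) (auto simp: trm)
  also have "\<dots> = (\<Sum>v\<in>natpermute (Suc m) (Suc m). w v)"
    by (rule cyc_sum) (auto intro: w_mset)
  also have "\<dots> = (\<Sum>v\<in>natpermute (Suc m) (Suc m). \<Prod>j\<in>{0..m}. G $ (v!j))"
    by (rule sum.cong) (auto simp: trm2)
  also have "\<dots> = (G^(Suc m)) $ (Suc m)"
    using fps_power_nth_Suc[of G m "Suc m"] by simp
  finally show ?thesis .
qed


lemma tele1:
  fixes X G :: "'b::comm_ring_1 fps"
  shows "(\<Sum>m<Suc N. (X * (fps_X - G) * G^m) $ m) = - (X * G^(Suc N)) $ N"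
proof (induction N)
  case 0
  have "X * (fps_X - G) = fps_X * X - X * G" by (simp add: algebra_simps)
  then show ?case by simp
next
  case (Suc N)
  have "X * (fps_X - G) * G^(Suc N) = fps_X * (X * G^(Suc N)) - X * G^(Suc (Suc N))"
    by (simp add: algebra_simps)
  then have "(X * (fps_X - G) * G^(Suc N)) $ Suc N = (X * G^(Suc N)) $ N - (X * G^(Suc (Suc N))) $ Suc N"
    by simp
  then show ?case using Suc by simp
qed

lemma tele2:
  fixes G :: "'b::comm_ring_1 fps"
  shows "(\<Sum>m<N. (fps_deriv (fps_X - G) * G^m) $ m) = 1 - (G^N) $ N"
proof (induction N)
  case 0
  then show ?case by simp
next
  case (Suc N)
  have "fps_deriv (fps_X - G) * G^N = G^N - fps_deriv G * G^N"
    by (simp add: algebra_simps)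
  then have "(fps_deriv (fps_X - G) * G^N) $ N = (G^N) $ N - (G^(Suc N)) $ Suc N"
    using J_lemma[of G N] by simp
  then show ?case using Suc by simp
qed

lemma main_identity:
  fixes G W :: "'b::comm_ring_1 fps" and c :: 'b
  assumes DW: "(fps_X - G) * W = fps_X - fps_const c"
  shows "(\<Sum>m<M. (fps_deriv (fps_X - G) * G^(Suc m)) $ m)
     = c - c * (G^(Suc M)) $ (Suc M) - (W * fps_deriv (fps_X - G) * G^(Suc M)) $ M"
proof -
  let ?D = "fps_X - G"
  have "(\<Sum>m<M. (fps_deriv ?D * G^(Suc m)) $ m) = (\<Sum>m<Suc M. (fps_X * (fps_deriv ?D * G^m)) $ m)"
    by (simp add: sum.lessThan_Suc_shift del: sum.lessThan_Suc)
  also have "\<dots> = (\<Sum>m<Suc M. (W * fps_deriv ?D * ?D * G^m) $ m + c * (fps_deriv ?D * G^m) $ m)"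
  proof (rule sum.cong[OF refl])
    fix m
    have "fps_X = ?D * W + fps_const c" using DW by (simp add: algebra_simps)
    then have "fps_X * (fps_deriv ?D * G^m) = W * fps_deriv ?D * ?D * G^m + fps_const c * (fps_deriv ?D * G^m)"
      by (metis (no_types, lifting) distrib_right mult.assoc mult.commute)
    then show "(fps_X * (fps_deriv ?D * G^m)) $ m = (W * fps_deriv ?D * ?D * G^m) $ m + c * (fps_deriv ?D * G^m) $ m"
      by simp
  qed
  also have "\<dots> = (\<Sum>m<Suc M. (W * fps_deriv ?D * ?D * G^m) $ m) + c * (\<Sum>m<Suc M. (fps_deriv ?D * G^m) $ m)"
    by (simp only: sum.distrib sum_distrib_left)
  also have "(\<Sum>m<Suc M. (W * fps_deriv ?D * ?D * G^m) $ m) = - (W * fps_deriv ?D * G^(Suc M)) $ M"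
    by (rule tele1)
  also have "(\<Sum>m<Suc M. (fps_deriv ?D * G^m) $ m) = 1 - (G^(Suc M)) $ (Suc M)"
    by (rule tele2)
  finally show ?thesis by (simp add: algebra_simps)
qed


definition vn :: "(nat \<Rightarrow> 'b::comm_ring_1 fps) \<Rightarrow> bool" where
  "vn f \<longleftrightarrow> (\<forall>n i. i < n \<longrightarrow> f n $ i = 0)"

definition ssum :: "(nat \<Rightarrow> 'b::comm_ring_1 fps) \<Rightarrow> 'b fps" where
  "ssum f = Abs_fps (\<lambda>k. \<Sum>n\<le>k. f n $ k)"

lemma vn_mult:
  assumes "vn f" shows "vn (\<lambda>n. c n * f n)"
  unfolding vn_def
proof (intro allI impI)
  fix n i :: nat assume i: "i < n"
  have "(c n * f n) $ i = (\<Sum>l=0..i. c n $ l * f n $ (i - l))" by (rule fps_mult_nth)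
  also have "\<dots> = 0"
    using assms i by (intro sum.neutral) (auto simp: vn_def)
  finally show "(c n * f n) $ i = 0" .
qed

lemma vn_power:
  fixes \<phi> :: "'b::comm_ring_1 fps"
  assumes "\<phi> $ 0 = 0" shows "vn (\<lambda>n. \<phi> ^ n)"
  unfolding vn_def
proof (rule allI)
  fix n show "\<forall>i. i < n \<longrightarrow> (\<phi> ^ n) $ i = 0"
  proof (induction n)
    case 0 then show ?case by simp
  next
    case (Suc n)
    show ?case
    proof (intro allI impI)
      fix i assume i: "i < Suc n"
      have "(\<phi> ^ Suc n) $ i = (\<Sum>l=0..i. \<phi> $ l * (\<phi>^n) $ (i - l))"
        by (simp add: fps_mult_nth)
      also have "\<dots> = 0"
      proof (intro sum.neutral ballI)
        fix l assume "l \<in> {0..i}"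
        then show "\<phi> $ l * (\<phi>^n) $ (i - l) = 0"
          using Suc.IH assms i by (cases l) auto
      qed
      finally show "(\<phi> ^ Suc n) $ i = 0" .
    qed
  qed
qed

lemma ssum_nth: "ssum f $ k = (\<Sum>n\<le>k. f n $ k)"
  by (simp add: ssum_def)

lemma ssum_sums:
  assumes "vn f" shows "f sums ssum f"
  unfolding sums_def
proof (rule tendsto_fpsI)
  fix k
  show "\<forall>\<^sub>F N in sequentially. (\<Sum>n<N. f n) $ k = ssum f $ k"
    unfolding eventually_sequentially
  proof (intro exI allI impI)
    fix N assume N: "Suc k \<le> N"
    have "(\<Sum>n<N. f n) $ k = (\<Sum>n<N. f n $ k)" by (simp add: fps_sum_nth)
    also have "\<dots> = (\<Sum>n\<le>k. f n $ k)"
    proof (rule sum.mono_neutral_right)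
      show "{..k} \<subseteq> {..<N}" using N by auto
      show "\<forall>i\<in>{..<N} - {..k}. f i $ k = 0" using assms by (auto simp: vn_def)
    qed auto
    finally show "(\<Sum>n<N. f n) $ k = ssum f $ k" by (simp add: ssum_nth)
  qed
qed

lemma ssum_head:
  assumes "vn f" shows "ssum f = f 0 + ssum (\<lambda>n. f (Suc n))"
proof (rule fps_ext)
  fix k
  have "(\<Sum>n\<le>Suc k. f n $ k) = f 0 $ k + (\<Sum>n\<le>k. f (Suc n) $ k)"
    by (simp add: sum.atMost_Suc_shift del: sum.atMost_Suc)
  moreover have "(\<Sum>n\<le>Suc k. f n $ k) = (\<Sum>n\<le>k. f n $ k)"
    using assms by (simp add: vn_def)
  ultimately show "ssum f $ k = (f 0 + ssum (\<lambda>n. f (Suc n))) $ k"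
    by (simp add: ssum_nth)
qed

lemma ssum_mult:
  assumes "vn f" shows "c * ssum f = ssum (\<lambda>n. c * f n)"
proof (rule fps_ext)
  fix k
  have "(c * ssum f) $ k = (\<Sum>l=0..k. c $ l * (\<Sum>n\<le>k - l. f n $ (k - l)))"
    by (simp add: fps_mult_nth ssum_nth)
  also have "\<dots> = (\<Sum>l=0..k. c $ l * (\<Sum>n\<le>k. f n $ (k - l)))"
  proof (rule sum.cong[OF refl])
    fix l assume "l \<in> {0..k}"
    have "(\<Sum>n\<le>k - l. f n $ (k - l)) = (\<Sum>n\<le>k. f n $ (k - l))"
      by (rule sum.mono_neutral_left) (use assms in \<open>auto simp: vn_def\<close>)
    then show "c $ l * (\<Sum>n\<le>k - l. f n $ (k - l)) = c $ l * (\<Sum>n\<le>k. f n $ (k - l))" by simp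
  qed
  also have "\<dots> = (\<Sum>n\<le>k. \<Sum>l=0..k. c $ l * f n $ (k - l))"
    by (simp add: sum_distrib_left sum.swap[of _ "{0..k}"])
  also have "\<dots> = ssum (\<lambda>n. c * f n) $ k"
    by (simp add: ssum_nth fps_mult_nth)
  finally show "(c * ssum f) $ k = ssum (\<lambda>n. c * f n) $ k" .
qed

definition Pw :: "nat \<Rightarrow> 'b::comm_ring_1 fps fps \<Rightarrow> bool" where
  "Pw k F \<longleftrightarrow> (\<forall>n i. 2 * i + n < k \<longrightarrow> F $ n $ i = 0)"

lemma Pw_0: "Pw 0 F" by (simp add: Pw_def)

lemma Pw_mult:
  assumes "Pw a F" "Pw b H" shows "Pw (a + b) (F * H)"
  unfolding Pw_def
proof (intro allI impI)
  fix n i :: nat assume ni: "2 * i + n < a + b"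
  have "(F * H) $ n $ i = (\<Sum>j=0..n. (F $ j * H $ (n - j)) $ i)"
    by (simp add: fps_mult_nth fps_sum_nth)
  also have "\<dots> = (\<Sum>j=0..n. \<Sum>l=0..i. F $ j $ l * H $ (n - j) $ (i - l))"
    by (simp add: fps_mult_nth)
  also have "\<dots> = 0"
  proof (intro sum.neutral ballI)
    fix j l assume j: "j \<in> {0..n}" and l: "l \<in> {0..i}"
    show "F $ j $ l * H $ (n - j) $ (i - l) = 0"
    proof (cases "2 * l + j < a")
      case True then show ?thesis using assms(1) by (simp add: Pw_def)
    next
      case False
      then have "2 * (i - l) + (n - j) < b" using ni j l by auto
      then show ?thesis using assms(2) by (simp add: Pw_def)
    qed
  qed
  finally show "(F * H) $ n $ i = 0" .
qed

lemma Pw_power: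
  assumes "Pw 2 G" shows "Pw (2 * m) (G ^ m)"
proof (induction m)
  case 0 then show ?case by (simp add: Pw_0)
next
  case (Suc m)
  have "Pw (2 + 2 * m) (G * G ^ m)" by (rule Pw_mult[OF assms Suc])
  then show ?case by simp
qed

lemma Pw_tail:
  assumes "Pw 2 G" "2 * i + n < 2 * m"
  shows "(X * G ^ m) $ n $ i = 0"
proof -
  have "Pw (0 + 2 * m) (X * G ^ m)" by (rule Pw_mult[OF Pw_0 Pw_power[OF assms(1)]])
  then show ?thesis using assms(2) by (simp add: Pw_def)
qed


lemma coeff_zero_mult:
  fixes \<phi> s :: "'b::comm_ring_1 fps"
  assumes "\<And>l. l \<le> i \<Longrightarrow> s $ l = 0"
  shows "(\<phi> * s) $ i = 0"
  unfolding fps_mult_nth using assms by (intro sum.neutral) auto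

lemma setup_lemma:
  fixes P :: "'a::field fps fps" and \<phi> :: "'a fps" and \<alpha> :: 'a
  assumes h0: "fps_nth \<phi> 0 = 0"
    and hP: "subst_y P \<phi> = 0"
    and ha: "fps_nth (fps_nth (fps_deriv P) 0) 0 = \<alpha>"
    and ha0: "\<alpha> \<noteq> 0"
  defines "D \<equiv> fps_const (fps_const (1/\<alpha>)) * P"
  shows "\<exists>W. D * W = fps_X - fps_const \<phi>"
    and "Pw 2 (fps_X - D)"
proof -
  let ?ca = "fps_const (1/\<alpha>) :: 'a fps"
  have Dn: "D $ n = ?ca * P $ n" for n by (simp add: D_def)
  have vP: "vn (\<lambda>n. P $ n * \<phi> ^ n)" by (rule vn_mult[OF vn_power[OF h0]])
  have "subst_y P \<phi> = ssum (\<lambda>n. P $ n * \<phi> ^ n)"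
    unfolding subst_y_def using sums_unique[OF ssum_sums[OF vP]] by simp
  with hP have sP: "ssum (\<lambda>n. P $ n * \<phi> ^ n) = 0" by simp
  have P00: "P $ 0 $ 0 = 0"
    using arg_cong[OF sP, of "\<lambda>f. f $ 0"] by (simp add: ssum_nth)
  have P10: "P $ 1 $ 0 = \<alpha>" using ha by simp
  have P10': "P $ Suc 0 $ 0 = \<alpha>" using P10 by simp
  have vD: "vn (\<lambda>n. D $ n * \<phi> ^ n)" by (rule vn_mult[OF vn_power[OF h0]])
  have sD: "ssum (\<lambda>n. D $ n * \<phi> ^ n) = 0"
  proof -
    have "ssum (\<lambda>n. D $ n * \<phi> ^ n) = ssum (\<lambda>n. ?ca * (P $ n * \<phi> ^ n))"
      by (simp add: Dn mult.assoc)
    also have "\<dots> = ?ca * ssum (\<lambda>n. P $ n * \<phi> ^ n)" by (rule ssum_mult[OF vP, symmetric])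
    finally show ?thesis using sP by simp
  qed
  define E where "E = Abs_fps (\<lambda>j. ssum (\<lambda>n. D $ (n + j + 1) * \<phi> ^ n))"
  have En: "E $ j = ssum (\<lambda>n. D $ (n + j + 1) * \<phi> ^ n)" for j by (simp add: E_def)
  have vE: "vn (\<lambda>n. D $ (n + j + 1) * \<phi> ^ n)" for j by (rule vn_mult[OF vn_power[OF h0]])
  have Erec: "E $ j = D $ (Suc j) + \<phi> * E $ (Suc j)" for j
  proof -
    have "E $ j = D $ (j + 1) * \<phi> ^ 0 + ssum (\<lambda>n. D $ (Suc n + j + 1) * \<phi> ^ Suc n)"
      unfolding En using ssum_head[OF vE[of j]] by simp
    also have "ssum (\<lambda>n. D $ (Suc n + j + 1) * \<phi> ^ Suc n) = ssum (\<lambda>n. \<phi> * (D $ (n + Suc j + 1) * \<phi> ^ n))"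
      by (rule arg_cong[where f = ssum]) (simp add: fun_eq_iff algebra_simps)
    also have "\<dots> = \<phi> * E $ (Suc j)" unfolding En by (rule ssum_mult[OF vE, symmetric])
    finally show ?thesis by simp
  qed
  have E0: "\<phi> * E $ 0 = - D $ 0"
  proof -
    have "0 = D $ 0 * \<phi> ^ 0 + ssum (\<lambda>n. D $ (Suc n) * \<phi> ^ Suc n)"
      using ssum_head[OF vD] sD by simp
    also have "ssum (\<lambda>n. D $ (Suc n) * \<phi> ^ Suc n) = ssum (\<lambda>n. \<phi> * (D $ (n + 0 + 1) * \<phi> ^ n))"
      by (rule arg_cong[where f = ssum]) (simp add: fun_eq_iff algebra_simps)
    also have "\<dots> = \<phi> * E $ 0" unfolding En by (rule ssum_mult[OF vE, symmetric])
    finally show ?thesis by (simp add: eq_neg_iff_add_eq_0 add.commute)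
  qed
  have DE: "(fps_X - fps_const \<phi>) * E = D"
  proof (rule fps_ext)
    fix n show "((fps_X - fps_const \<phi>) * E) $ n = D $ n"
    proof (cases n)
      case 0 then show ?thesis using E0 by (simp add: algebra_simps)
    next
      case (Suc j) then show ?thesis using Erec[of j] by (simp add: algebra_simps)
    qed
  qed
  have E00: "E $ 0 $ 0 = 1"
    using ha0 by (simp add: En ssum_nth Dn P10')
  define W where "W = fps_right_inverse E (inverse (E $ 0))"
  have "E $ 0 * inverse (E $ 0) = 1" by (rule inverse_mult_eq_1') (simp add: E00)
  then have EW: "E * W = 1" unfolding W_def by (rule fps_right_inverse)
  have "D * W = fps_X - fps_const \<phi>"
    using DE EW by (metis mult.assoc mult.right_neutral)
  then show "\<exists>W. D * W = fps_X - fps_const \<phi>" by blast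
  show "Pw 2 (fps_X - D)"
    unfolding Pw_def
  proof (intro allI impI)
    fix n i :: nat assume "2 * i + n < 2"
    then have "i = 0 \<and> (n = 0 \<or> n = 1)" by auto
    then show "(fps_X - D) $ n $ i = 0"
      using ha0 P00 P10 P10' by (auto simp: Dn)
  qed
qed


lemma ofnat_mult_nth:
  fixes F :: "'b::comm_semiring_1 fps fps"
  shows "(of_nat k * F) $ n = fps_const (of_nat k) * F $ n"
proof -
  have "of_nat k * F = fps_const (fps_const (of_nat k)) * F" by (simp add: fps_of_nat)
  then show ?thesis by simp
qed

lemma div_helper:
  fixes b c :: "'a::field"
  assumes "b \<noteq> 0" shows "1 / (c * b) * b = 1 / c"
  using assms by (cases "c = 0") (simp_all add: field_simps)

theorem corollary3p2:
  fixes P :: "'a::field fps fps" and \<phi> :: "'a fps" and \<alpha> :: 'a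
  assumes "fps_nth \<phi> 0 = 0"
    and "subst_y P \<phi> = 0"
    and "fps_nth (fps_nth (fps_deriv P) 0) 0 = \<alpha>"
    and "\<alpha> \<noteq> 0"
  shows "((\<lambda>m. fps_const (1 / \<alpha> ^ (m + 2)) *
            fps_nth (fps_deriv P * (fps_const (fps_const \<alpha>) * fps_X - P) ^ (m + 1)) m)
          sums \<phi>)
       \<and> (CHAR('a) = 0 \<longrightarrow>
          ((\<lambda>m. fps_const (1 / (of_nat (m + 1) * \<alpha> ^ (m + 1))) *
            fps_nth ((fps_const (fps_const \<alpha>) * fps_X - P) ^ (m + 1)) m) sums \<phi>))"
proof -
  note ha0 = assms(4)
  define D where "D = fps_const (fps_const (1/\<alpha>)) * P"
  obtain W where DW0: "D * W = fps_X - fps_const \<phi>"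
    using setup_lemma(1)[OF assms] unfolding D_def by blast
  have PwG: "Pw 2 (fps_X - D)"
    using setup_lemma(2)[OF assms] unfolding D_def by blast
  define G where "G = fps_X - D"
  have DG: "D = fps_X - G" by (simp add: G_def)
  have DW: "(fps_X - G) * W = fps_X - fps_const \<phi>" using DW0 DG by simp
  have Pw2: "Pw 2 G" using PwG by (simp add: G_def)
  define Q where "Q = fps_const (fps_const \<alpha>) * fps_X - P"
  let ?ca = "fps_const (fps_const (1/\<alpha>)) :: 'a fps fps"
  have caa: "?ca * fps_const (fps_const \<alpha>) = 1" using ha0 by simp
  have GQ: "G = ?ca * Q"
  proof -
    have "?ca * Q = (?ca * fps_const (fps_const \<alpha>)) * fps_X - ?ca * P"
      unfolding Q_def by (simp only: right_diff_distrib mult.assoc)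
    then have "?ca * Q = fps_X - ?ca * P" by (simp only: caa mult_1)
    then show ?thesis by (simp only: G_def D_def)
  qed
  have QG: "Q = fps_const (fps_const \<alpha>) * G"
  proof -
    have aca: "fps_const (fps_const \<alpha>) * ?ca = 1" using caa by (simp only: mult.commute)
    show ?thesis by (simp only: GQ mult.assoc[symmetric] aca mult_1)
  qed
  have dD: "fps_deriv D = ?ca * fps_deriv P" by (simp add: D_def)
  define TA where "TA = (\<lambda>m. (fps_deriv D * G ^ Suc m) $ m)"
  have TA_eq: "fps_const (1 / \<alpha> ^ (m + 2)) * fps_nth (fps_deriv P * Q ^ (m + 1)) m = TA m" for m
  proof -
    have "fps_deriv D * G ^ Suc m = ?ca ^ (m + 2) * (fps_deriv P * Q ^ (m + 1))"
      unfolding dD GQ power_mult_distrib by (simp only: mult_ac power_Suc numeral_2_eq_2 add_Suc_right add_0_right Suc_eq_plus1[symmetric])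
    also have "?ca ^ (m + 2) = fps_const (fps_const (1 / \<alpha> ^ (m + 2)))"
      by (simp add: power_one_over)
    finally show ?thesis unfolding TA_def by simp
  qed
  have partA: "(\<Sum>m<M. TA m) = \<phi> - \<phi> * (G^(Suc M)) $ (Suc M) - (W * fps_deriv D * G^(Suc M)) $ M" for M
    unfolding TA_def DG by (rule main_identity[OF DW])
  have tailA: "(\<Sum>m<M. TA m) $ i = \<phi> $ i" if "2 * i < M" for i M
  proof -
    have z1: "((G^(Suc M)) $ (Suc M)) $ l = 0" if "l \<le> i" for l
      using Pw_tail[OF Pw2, of l "Suc M" "Suc M" 1] that \<open>2 * i < M\<close> by simp
    have z2: "(W * fps_deriv D * G^(Suc M)) $ M $ i = 0"
      using Pw_tail[OF Pw2, of i M "Suc M" "W * fps_deriv D"] that by simp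
    have z3: "(\<phi> * (G^(Suc M)) $ (Suc M)) $ i = 0"
      by (rule coeff_zero_mult) (rule z1)
    show ?thesis unfolding partA using z2 z3 by simp
  qed
  have sumsA: "TA sums \<phi>"
    unfolding sums_def
  proof (rule tendsto_fpsI)
    fix i
    show "\<forall>\<^sub>F M in sequentially. (\<Sum>m<M. TA m) $ i = \<phi> $ i"
      unfolding eventually_sequentially using tailA by (intro exI[of _ "Suc (2 * i)"]) auto
  qed
  have partA_sums: "(\<lambda>m. fps_const (1 / \<alpha> ^ (m + 2)) *
            fps_nth (fps_deriv P * (fps_const (fps_const \<alpha>) * fps_X - P) ^ (m + 1)) m) sums \<phi>"
    using sumsA unfolding Q_def[symmetric] TA_eq .
  define u where "u = (\<lambda>m. (G^(Suc m)) $ m)"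
  have partB_sums: "(\<lambda>m. fps_const (1 / (of_nat (m + 1) * \<alpha> ^ (m + 1))) *
            fps_nth ((fps_const (fps_const \<alpha>) * fps_X - P) ^ (m + 1)) m) sums \<phi>"
    if ch: "CHAR('a) = 0"
  proof -
    have nz: "of_nat k \<noteq> (0::'a)" if "k > 0" for k
      using of_nat_eq_0_iff_char_dvd[of k, where 'a='a] ch that by simp
    define TB where "TB = (\<lambda>m. fps_const (1 / of_nat (m + 1)) * u m)"
    have TB_eq: "fps_const (1 / (of_nat (m + 1) * \<alpha> ^ (m + 1))) * (Q ^ (m + 1)) $ m = TB m" for m
    proof -
      have "Q ^ (m + 1) = fps_const (fps_const (\<alpha> ^ (m + 1))) * G ^ (m + 1)"
        unfolding QG power_mult_distrib by simp
      then have qm: "(Q ^ (m + 1)) $ m = fps_const (\<alpha> ^ (m + 1)) * u m" by (simp add: u_def)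
      have sc: "(1 / (of_nat (m + 1) * \<alpha> ^ (m + 1))) * \<alpha> ^ (m + 1) = 1 / (of_nat (m + 1) :: 'a)"
        using ha0 by (intro div_helper) simp
      have "fps_const (1 / (of_nat (m + 1) * \<alpha> ^ (m + 1))) * (Q ^ (m + 1)) $ m
          = fps_const (1 / (of_nat (m + 1) * \<alpha> ^ (m + 1))) * (fps_const (\<alpha> ^ (m + 1)) * u m)"
        by (simp only: qm)
      also have "\<dots> = fps_const ((1 / (of_nat (m + 1) * \<alpha> ^ (m + 1))) * \<alpha> ^ (m + 1)) * u m"
        by (simp only: mult.assoc[symmetric] fps_const_mult)
      also have "\<dots> = TB m" unfolding sc TB_def ..
      finally show ?thesis .
    qed
    have dGm: "(fps_deriv G * G^(Suc m)) $ m = fps_const (of_nat (m+1) / of_nat (m+2)) * u (Suc m)" for m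
    proof -
      have A: "fps_deriv (G^(Suc (Suc m))) = of_nat (Suc (Suc m)) * (fps_deriv G * G^(Suc m))"
        using fps_deriv_power'[of G "Suc (Suc m)"] by (simp only: diff_Suc_1 mult.assoc)
      have B: "fps_deriv (G^(Suc (Suc m))) $ m = fps_const (of_nat (m+1)) * u (Suc m)"
        unfolding fps_deriv_nth u_def by (simp only: fps_of_nat Suc_eq_plus1)
      have C: "(of_nat (Suc (Suc m)) * (fps_deriv G * G^(Suc m))) $ m
             = fps_const (of_nat (m+2)) * (fps_deriv G * G^(Suc m)) $ m"
        unfolding ofnat_mult_nth by (simp only: Suc_eq_plus1 add.assoc one_add_one)
      have e: "fps_const (of_nat (m+1)) * u (Suc m) = fps_const (of_nat (m+2)) * (fps_deriv G * G^(Suc m)) $ m"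
        using A B C by metis
      have "fps_const (of_nat (m+1) / of_nat (m+2)) * u (Suc m)
          = fps_const (1 / of_nat (m+2)) * (fps_const (of_nat (m+1)) * u (Suc m))"
      proof -
        have "(of_nat (m+1) / of_nat (m+2)) = (1/of_nat (m+2)) * (of_nat (m+1)::'a)" by simp
        then show ?thesis by (simp only: mult.assoc[symmetric] fps_const_mult)
      qed
      also have "\<dots> = fps_const (1 / of_nat (m+2) * of_nat (m+2)) * (fps_deriv G * G^(Suc m)) $ m"
        unfolding e by (simp only: mult.assoc[symmetric] fps_const_mult)
      also have "1 / of_nat (m+2) * of_nat (m+2) = (1::'a)" using nz[of "m+2"] by simp
      finally show ?thesis by simp
    qed
    have TAu: "TA m = u m - fps_const (of_nat (m+1) / of_nat (m+2)) * u (Suc m)" for m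
    proof -
      have "fps_deriv D * G ^ Suc m = G ^ Suc m - fps_deriv G * G ^ Suc m"
        unfolding DG by (simp add: algebra_simps)
      then show ?thesis unfolding TA_def using dGm[of m] by (simp add: u_def)
    qed
    have partB: "(\<Sum>m<Suc M. TB m) = (\<Sum>m<M. TA m) + u M" for M
    proof (induction M)
      case 0 then show ?case by (simp add: TB_def)
    next
      case (Suc M)
      have sc: "1 / of_nat (Suc M + 1) = 1 - of_nat (M+1) / (of_nat (M+2) :: 'a)"
        using nz[of "M+2"] by (simp add: field_simps)
      have "TB (Suc M) = TA M + u (Suc M) - u M"
        unfolding TAu TB_def sc by (simp add: fps_const_sub[symmetric] algebra_simps del: fps_const_sub)
      then show ?case using Suc by (simp add: algebra_simps)
    qed
    have "TB sums \<phi>"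
      unfolding sums_def
    proof (rule tendsto_fpsI)
      fix i
      have "(\<Sum>m<N. TB m) $ i = \<phi> $ i" if N: "N \<ge> Suc (Suc (2 * i))" for N
      proof -
        obtain M where M: "N = Suc M" using N by (cases N) auto
        have "u M $ i = 0"
          using Pw_tail[OF Pw2, of i M "Suc M" 1] M N by (simp add: u_def)
        then show ?thesis using partB[of M] tailA[of i M] M N by simp
      qed
      then show "\<forall>\<^sub>F N in sequentially. (\<Sum>m<N. TB m) $ i = \<phi> $ i"
        unfolding eventually_sequentially by blast
    qed
    then show ?thesis unfolding Q_def[symmetric] TB_eq .
  qed
  show ?thesis using partA_sums partB_sums by blast
qed

end
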